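(* Assume $\mathrm{recc}(C)\subseteq\mathrm{recc}(P^B)$. Then $$P^B\setminus T^C=\bigcup_{k\in N_2\cup\{0\}}\big(P^B\setminus S_k^C\big).$$
   Context: Let $A\in\mathbb{R}^{m\times n}$ have full row rank, $b\in\mathbb{R}^m$, and $P=\{x\in\mathbb{R}^n_+ : Ax=b\}$. Let $C\subseteq\mathbb{R}^n$ be an open convex set. Fix a basis $B\subseteq\{1,\dots,n\}$ of $P$ with nonbasic set $N=\{1,\dots,n\}\setminus B$. Write $P=\{x: x_i=\bar b_i-\sum_{j\in N}\bar a_{ij}x_j\ (i\in B),\ x_j\ge0\ (j=1,\dots,n)\}$ with $\bar b\ge0$. The basic solution $\bar x$ has $\bar x_i=\bar b_i$ ($i\in B$) and $\bar x_i=0$ ($i\in N$). $P^B$ is obtained by dropping the constraints $x_i\ge0$ for $i\in B$. For $j\in N$, $\bar r^j$ is given by $\bar r^j_k=-\bar a_{kj}$ ($k\in B$), $\bar r^j_j=1$, and $\bar r^j_k=0$ ($k\in N\setminus\{j\}$). Thus $P^B=\{\bar x+\sum_{j\in N}x_j\bar r^j: x_j\ge0\}$, a translated simplicial cone with linearly independent extreme rays $\bar r^j$. It is assumed that $\bar x\notin\mathrm{cl}(C)$. For $j\in N$, $\alpha_j=\inf\{\lambda\ge0:\bar x+\lambda\bar r^j\in C\}$ and $\beta_j=\sup\{\lambda\ge0:\bar x+\lambda\bar r^j\in C\}$, with $\alpha_j=+\infty$, $\beta_j=-\infty$ if that halfline misses $C$. The set $N$ is partitioned into - $N_0=\{j:\alpha_j=+\infty,\beta_j=-\infty\}$,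 - $N_1=\{j:\alpha_j\in(0,\infty),\beta_j=+\infty\}$, - $N_2=\{j:\alpha_j\in(0,\infty),\beta_j\in(\alpha_j,\infty)\}$. Let $N_{12}=N_1\cup N_2$. For a set $K$, $\mathrm{recc}(K)=\{d: x+\lambda d\in K\ \forall x\in K,\lambda\ge0\}$. Define - $T^C=\{\bar x\}+\mathrm{conv}\big(\bigcup_{j\in N_{12}}\{\lambda\bar r^j:\alpha_j<\lambda<\beta_j\}\big)+\mathrm{recc}(C)$; - $S_0^C=\{\bar x\}+\mathrm{conv}\big(\bigcup_{j\in N_{12}}\{\lambda\bar r^j:\lambda>\alpha_j\}\big)+\mathrm{recc}(C)$; - for each $k\in N_2$, $S_k^C=\{\bar x\}+\mathrm{conv}\big(\bigcup_{j\in N_2}\{\lambda\bar r^j:0\le\lambda<\beta_j\}\big)+\{\lambda\bar r^k:\lambda\le0\}+\mathrm{recc}(C)$. (The index $0$ is not an element of $N$.) *)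

theory Defs
  imports "HOL-Analysis.Analysis" "HOL-Library.Extended_Real"
begin

definition recc :: "'a::real_vector set \<Rightarrow> 'a set" where
  "recc K = {d. \<forall>x\<in>K. \<forall>t::real. t \<ge> 0 \<longrightarrow> x + t *\<^sub>R d \<in> K}"

definition xbar :: "'n::finite set \<Rightarrow> ('n \<Rightarrow> real) \<Rightarrow> real^'n" where
  "xbar B bb = (\<chi> i. if i \<in> B then bb i else 0)"

definition rbar :: "'n::finite set \<Rightarrow> ('n \<Rightarrow> 'n \<Rightarrow> real) \<Rightarrow> 'n \<Rightarrow> real^'n" where
  "rbar B ab j = (\<chi> k. if k \<in> B then - ab k j else if k = j then 1 else 0)"

text \<open>P^B: the tableau polyhedron with the nonnegativity of the basic variables dropped.\<close>
definition PB :: "'n::finite set \<Rightarrow> ('n \<Rightarrow> real) \<Rightarrow> ('n \<Rightarrow> 'n \<Rightarrow> real) \<Rightarrow> (real^'n) set" where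
  "PB B bb ab = {x. (\<forall>i\<in>B. x$i = bb i - (\<Sum>j\<in>-B. ab i j * x$j)) \<and> (\<forall>j\<in>-B. 0 \<le> x$j)}"

definition alpha :: "(real^'n::finite) set \<Rightarrow> 'n set \<Rightarrow> ('n \<Rightarrow> real) \<Rightarrow> ('n \<Rightarrow> 'n \<Rightarrow> real) \<Rightarrow> 'n \<Rightarrow> ereal" where
  "alpha C B bb ab j = Inf (ereal ` {l. 0 \<le> l \<and> xbar B bb + l *\<^sub>R rbar B ab j \<in> C})"

definition beta :: "(real^'n::finite) set \<Rightarrow> 'n set \<Rightarrow> ('n \<Rightarrow> real) \<Rightarrow> ('n \<Rightarrow> 'n \<Rightarrow> real) \<Rightarrow> 'n \<Rightarrow> ereal" where
  "beta C B bb ab j = Sup (ereal ` {l. 0 \<le> l \<and> xbar B bb + l *\<^sub>R rbar B ab j \<in> C})"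

definition N0 :: "(real^'n::finite) set \<Rightarrow> 'n set \<Rightarrow> ('n \<Rightarrow> real) \<Rightarrow> ('n \<Rightarrow> 'n \<Rightarrow> real) \<Rightarrow> 'n set" where
  "N0 C B bb ab = {j\<in>-B. alpha C B bb ab j = \<infinity> \<and> beta C B bb ab j = -\<infinity>}"

definition N1 :: "(real^'n::finite) set \<Rightarrow> 'n set \<Rightarrow> ('n \<Rightarrow> real) \<Rightarrow> ('n \<Rightarrow> 'n \<Rightarrow> real) \<Rightarrow> 'n set" where
  "N1 C B bb ab = {j\<in>-B. 0 < alpha C B bb ab j \<and> alpha C B bb ab j < \<infinity> \<and> beta C B bb ab j = \<infinity>}"

definition N2 :: "(real^'n::finite) set \<Rightarrow> 'n set \<Rightarrow> ('n \<Rightarrow> real) \<Rightarrow> ('n \<Rightarrow> 'n \<Rightarrow> real) \<Rightarrow> 'n set" where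
  "N2 C B bb ab = {j\<in>-B. 0 < alpha C B bb ab j \<and> alpha C B bb ab j < \<infinity> \<and>
                         alpha C B bb ab j < beta C B bb ab j \<and> beta C B bb ab j < \<infinity>}"

definition TC :: "(real^'n::finite) set \<Rightarrow> 'n set \<Rightarrow> ('n \<Rightarrow> real) \<Rightarrow> ('n \<Rightarrow> 'n \<Rightarrow> real) \<Rightarrow> (real^'n) set" where
  "TC C B bb ab = {xbar B bb + u + d | u d.
     u \<in> convex hull (\<Union>j\<in>N1 C B bb ab \<union> N2 C B bb ab.
            {l *\<^sub>R rbar B ab j | l. alpha C B bb ab j < ereal l \<and> ereal l < beta C B bb ab j})
     \<and> d \<in> recc C}"

definition S0 :: "(real^'n::finite) set \<Rightarrow> 'n set \<Rightarrow> ('n \<Rightarrow> real) \<Rightarrow> ('n \<Rightarrow> 'n \<Rightarrow> real) \<Rightarrow> (real^'n) set" where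
  "S0 C B bb ab = {xbar B bb + u + d | u d.
     u \<in> convex hull (\<Union>j\<in>N1 C B bb ab \<union> N2 C B bb ab.
            {l *\<^sub>R rbar B ab j | l. alpha C B bb ab j < ereal l})
     \<and> d \<in> recc C}"

definition Sk :: "(real^'n::finite) set \<Rightarrow> 'n set \<Rightarrow> ('n \<Rightarrow> real) \<Rightarrow> ('n \<Rightarrow> 'n \<Rightarrow> real) \<Rightarrow> 'n \<Rightarrow> (real^'n) set" where
  "Sk C B bb ab k = {xbar B bb + u + \<mu> *\<^sub>R rbar B ab k + d | u \<mu> d.
     u \<in> convex hull (\<Union>j\<in>N2 C B bb ab.
            {l *\<^sub>R rbar B ab j | l. 0 \<le> l \<and> ereal l < beta C B bb ab j})
     \<and> \<mu> \<le> 0 \<and> d \<in> recc C}"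

end

theory Submission
  imports Defs
begin


lemma rbar_comp: "(rbar B ab j)$i = (if i\<in>B then - ab i j else if i = j then 1 else 0)"
  by (simp add: rbar_def)

lemma sum_rbar_comp:
  "(\<Sum>j\<in>-B. c j *\<^sub>R rbar B ab j) $ i = (if i \<in> B then - (\<Sum>j\<in>-B. c j * ab i j) else c i)"
proof (cases "i \<in> B")
  case True then show ?thesis by (simp add: sum_component rbar_def sum_negf)
next
  case False
  have "(\<Sum>j\<in>-B. c j *\<^sub>R rbar B ab j) $ i = (\<Sum>j\<in>-B. c j * (rbar B ab j) $ i)"
    by (simp add: sum_component)
  also have "\<dots> = (\<Sum>j\<in>-B. (if i = j then c j else 0))"
    using False by (intro sum.cong) (auto simp: rbar_def)
  also have "\<dots> = c i" using False by (simp add: sum.delta)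
  finally show ?thesis using False by simp
qed

definition inV :: "'n::finite set \<Rightarrow> ('n \<Rightarrow> 'n \<Rightarrow> real) \<Rightarrow> real^'n \<Rightarrow> bool" where
  "inV B ab z \<longleftrightarrow> (\<forall>i\<in>B. z$i = - (\<Sum>j\<in>-B. z$j * ab i j))"

lemma inV_repr: assumes "inV B ab z" shows "z = (\<Sum>j\<in>-B. z$j *\<^sub>R rbar B ab j)"
proof -
  have "z$i = (\<Sum>j\<in>-B. z$j *\<^sub>R rbar B ab j)$i" for i
    unfolding sum_rbar_comp using assms by (auto simp: inV_def)
  then show ?thesis by (subst vec_eq_iff) blast
qed

lemma inV_diff: "inV B ab x \<Longrightarrow> inV B ab y \<Longrightarrow> inV B ab (x - y)"
  by (auto simp: inV_def sum_subtractf left_diff_distrib)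

lemma inV_comb: "inV B ab x \<Longrightarrow> inV B ab y \<Longrightarrow> inV B ab (u *\<^sub>R x + v *\<^sub>R y)"
  by (auto simp: inV_def sum.distrib sum_distrib_left distrib_right mult.assoc)

lemma xbar_PB: "xbar B bb \<in> PB B bb ab"
  by (simp add: xbar_def PB_def)

lemma PB_diff:
  assumes "x \<in> PB B bb ab"
  shows "inV B ab (x - xbar B bb) \<and> (\<forall>j\<in>-B. 0 \<le> (x - xbar B bb)$j)"
proof -
  have "(\<Sum>j\<in>-B. ab i j * (x - xbar B bb)$j) = (\<Sum>j\<in>-B. ab i j * x$j)" for i
    by (intro sum.cong) (auto simp: xbar_def)
  moreover have "(\<Sum>j\<in>-B. (x - xbar B bb)$j * ab i j) = (\<Sum>j\<in>-B. ab i j * (x - xbar B bb)$j)" for i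
    by (simp add: mult.commute)
  ultimately show ?thesis using assms by (auto simp: inV_def PB_def xbar_def)
qed

lemma reccPB:
  assumes "d \<in> recc (PB B bb ab)"
  shows "inV B ab d \<and> (\<forall>j\<in>-B. 0 \<le> d$j)"
proof -
  have "xbar B bb + 1 *\<^sub>R d \<in> PB B bb ab" using assms xbar_PB[of B bb ab] zero_le_one unfolding recc_def by blast
  from PB_diff[OF this] show ?thesis by simp
qed

lemma recc_zero: "0 \<in> recc C" by (simp add: recc_def)

lemma recc_add: "d1 \<in> recc C \<Longrightarrow> d2 \<in> recc C \<Longrightarrow> d1 + d2 \<in> recc C"
proof -
  assume h: "d1 \<in> recc C" "d2 \<in> recc C"
  show ?thesis unfolding recc_def
  proof (intro CollectI ballI allI impI)
    fix x and t :: real assume x: "x \<in> C" "0 \<le> t"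
    have "x + t *\<^sub>R d1 \<in> C" using h(1) x unfolding recc_def by blast
    then have "(x + t *\<^sub>R d1) + t *\<^sub>R d2 \<in> C" using h(2) x unfolding recc_def by blast
    then show "x + t *\<^sub>R (d1 + d2) \<in> C" by (simp add: scaleR_add_right add.assoc)
  qed
qed

lemma recc_scale: "d \<in> recc C \<Longrightarrow> 0 \<le> c \<Longrightarrow> c *\<^sub>R d \<in> recc C"
  unfolding recc_def by (simp add: zero_le_mult_iff)

lemma recc_convex: assumes "convex C" shows "convex (recc C)"
proof (rule convexI)
  fix d1 d2 and u v :: real assume h: "d1 \<in> recc C" "d2 \<in> recc C" "0 \<le> u" "0 \<le> v" "u + v = 1"
  show "u *\<^sub>R d1 + v *\<^sub>R d2 \<in> recc C"
    by (intro recc_add recc_scale h)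
qed


lemma ray_recc:
  fixes C :: "'a::real_normed_vector set"
  assumes op: "open C" and cv: "convex C" and unb: "\<And>M. \<exists>l. M < l \<and> p + l *\<^sub>R v \<in> C"
  shows "v \<in> recc C"
  unfolding recc_def
proof (intro CollectI ballI allI impI)
  fix z and t :: real assume z: "z \<in> C" and t: "0 \<le> t"
  show "z + t *\<^sub>R v \<in> C"
  proof (cases "t = 0")
    case True then show ?thesis using z by simp
  next
    case False
    with t have tp: "0 < t" by simp
    obtain e where e: "0 < e" "ball z e \<subseteq> C" using op z open_contains_ball by blast
    define M where "M = 2*t + 2*t*norm (z - p)/e"
    obtain l where l: "M < l" "p + l *\<^sub>R v \<in> C" using unb by blast
    have M2t: "2*t \<le> M" unfolding M_def using e tp by (simp add: divide_nonneg_pos)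
    have lp: "0 < l" using l M2t tp by linarith
    define th where "th = t / l"
    have th0: "0 < th" using tp lp by (simp add: th_def)
    have th1: "th < 1/2" using l M2t tp lp by (simp add: th_def field_simps)
    define q where "q = z + (th/(1-th)) *\<^sub>R (z - p)"
    have "dist z q = (th/(1-th)) * norm (z - p)"
      using th0 th1 by (simp add: q_def dist_norm)
    also have "\<dots> \<le> (2*th) * norm (z - p)"
      using th0 th1 by (intro mult_right_mono) (auto simp: field_simps)
    also have "\<dots> < e"
    proof -
      have "2*t*norm (z - p)/e < l" using l M2t tp unfolding M_def by linarith
      then have "2*t*norm (z - p) < l * e" using e by (simp add: field_simps)
      then show ?thesis using lp by (simp add: th_def field_simps)
    qed
    finally have "q \<in> C" using e by auto
    have eq: "(1 - th) *\<^sub>R q + th *\<^sub>R (p + l *\<^sub>R v) = z + t *\<^sub>R v"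
    proof -
      have "(1 - th) *\<^sub>R q = (1 - th) *\<^sub>R z + th *\<^sub>R (z - p)"
        using th1 by (simp add: q_def scaleR_add_right)
      moreover have "th * l = t" using lp by (simp add: th_def)
      ultimately show ?thesis by (simp add: algebra_simps)
    qed
    have "(1 - th) *\<^sub>R q + th *\<^sub>R (p + l *\<^sub>R v) \<in> C"
      using cv \<open>q \<in> C\<close> l(2) th0 th1 by (intro convexD) auto
    then show ?thesis using eq by simp
  qed
qed

lemma N1_recc:
  assumes "open C" "convex C" "j \<in> N1 C B bb ab"
  shows "rbar B ab j \<in> recc C"
proof (rule ray_recc[OF assms(1,2)])
  fix M
  show "\<exists>l. M < l \<and> xbar B bb + l *\<^sub>R rbar B ab j \<in> C"
  proof (rule ccontr)
    assume "\<not> ?thesis"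
    then have "\<forall>l\<in>{l. 0 \<le> l \<and> xbar B bb + l *\<^sub>R rbar B ab j \<in> C}. ereal l \<le> ereal M"
      by force
    then have "beta C B bb ab j \<le> ereal M" unfolding beta_def
      by (intro Sup_least) auto
    moreover have "beta C B bb ab j = \<infinity>" using assms(3) by (simp add: N1_def)
    ultimately show False by simp
  qed
qed

lemma lin_comb:
  "(\<Sum>j\<in>S. (u *\<^sub>R x + v *\<^sub>R y)$j * c j) = u * (\<Sum>j\<in>S. x$j * c j) + v * (\<Sum>j\<in>S. y$j * c j)"
  by (simp add: sum.distrib sum_distrib_left algebra_simps)

lemma comb_gt: fixes a b u v :: real
  assumes "0 \<le> u" "0 \<le> v" "u + v = 1" "c < a" "c < b" shows "c < u * a + v * b"
proof -
  have "u * c \<le> u * a" "v * c \<le> v * b" using assms by (auto intro: mult_left_mono)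
  moreover have "u * c < u * a \<or> v * c < v * b" using assms by (cases "u = 0") auto
  moreover have "c = u * c + v * c" proof -
    have "u * c + v * c = (u + v) * c" by (simp add: distrib_right)
    then show ?thesis using assms(3) by simp
  qed
  ultimately show ?thesis by linarith
qed

lemma comb_lt: fixes a b u v :: real
  assumes "0 \<le> u" "0 \<le> v" "u + v = 1" "a < c" "b < c" shows "u * a + v * b < c"
  using comb_gt[of u v "-c" "-a" "-b"] assms by simp

lemma ereal_pos_fin: "0 < x \<Longrightarrow> x < \<infinity> \<Longrightarrow> x = ereal (real_of_ereal x) \<and> 0 < real_of_ereal x"
  by (cases x) auto



lemma inV_add: "inV B ab x \<Longrightarrow> inV B ab y \<Longrightarrow> inV B ab (x + y)"
  using inV_comb[of B ab x y 1 1] by simp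

lemma rbar_nB: "j \<notin> B \<Longrightarrow> i \<notin> B \<Longrightarrow> (rbar B ab j)$i = (if i = j then 1 else 0)"
  by (simp add: rbar_def)

lemma inV_ray: assumes "j \<notin> B" shows "inV B ab (c *\<^sub>R rbar B ab j)"
proof -
  have "(\<Sum>j'\<in>-B. (c *\<^sub>R rbar B ab j)$j' * ab i j') = c * ab i j" for i
  proof -
    have "(\<Sum>j'\<in>-B. (c *\<^sub>R rbar B ab j)$j' * ab i j') = (\<Sum>j'\<in>-B. if j' = j then c * ab i j else 0)"
      by (intro sum.cong) (auto simp: rbar_def)
    also have "\<dots> = c * ab i j" using assms by (simp add: sum.delta')
    finally show ?thesis .
  qed
  then show ?thesis by (simp add: inV_def rbar_def)
qed

lemma sum_ray: assumes "k \<notin> B" "S \<subseteq> -B" "finite S"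
  shows "(\<Sum>j\<in>S. (rbar B ab k)$j * c j) = (if k \<in> S then c k else 0)"
proof -
  have "(\<Sum>j\<in>S. (rbar B ab k)$j * c j) = (\<Sum>j\<in>S. if k = j then c k else 0)"
    using assms by (intro sum.cong) (auto simp: rbar_def)
  also have "\<dots> = (if k \<in> S then c k else 0)" using assms by (simp add: sum.delta)
  finally show ?thesis .
qed

locale setting =
  fixes C :: "(real^'n::finite) set" and B :: "'n set" and bb :: "'n \<Rightarrow> real" and ab :: "'n \<Rightarrow> 'n \<Rightarrow> real"
  assumes op: "open C" and cv: "convex C"
begin

abbreviation "n1 \<equiv> N1 C B bb ab"
abbreviation "n2 \<equiv> N2 C B bb ab"
abbreviation "al \<equiv> alpha C B bb ab"
abbreviation "be \<equiv> beta C B bb ab"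
abbreviation "r \<equiv> rbar B ab"
abbreviation "xb \<equiv> xbar B bb"
abbreviation "a j \<equiv> real_of_ereal (al j)"
abbreviation "b j \<equiv> real_of_ereal (be j)"
abbreviation "F z \<equiv> (\<Sum>j\<in>n1 \<union> n2. z$j * (1 / a j))"
abbreviation "G z \<equiv> (\<Sum>j\<in>n2. z$j * (1 / b j))"

lemma n1B: "n1 \<subseteq> -B" by (auto simp: N1_def)
lemma n2B: "n2 \<subseteq> -B" by (auto simp: N2_def)
lemma n12: "n1 \<inter> n2 = {}" by (auto simp: N1_def N2_def)
lemma al_fin: "j \<in> n1 \<union> n2 \<Longrightarrow> al j = ereal (a j) \<and> 0 < a j"
  by (rule ereal_pos_fin) (auto simp: N1_def N2_def)
lemma be_fin: "j \<in> n2 \<Longrightarrow> be j = ereal (b j) \<and> a j < b j"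
proof -
  assume j: "j \<in> n2"
  then have "0 < al j" "al j < be j" "be j < \<infinity>" by (auto simp: N2_def)
  then have "be j = ereal (b j)" by (cases "be j") auto
  moreover have "al j = ereal (a j)" using al_fin j by blast
  ultimately show ?thesis using \<open>al j < be j\<close> by (metis less_ereal.simps(1))
qed
lemma be_inf: "j \<in> n1 \<Longrightarrow> be j = \<infinity>" by (simp add: N1_def)

end


context setting begin

lemma F_ray: assumes "j \<in> n1 \<union> n2" shows "F (l *\<^sub>R r j) = l * (1 / a j)"
proof -
  have jB: "j \<notin> B" using n1B n2B assms by auto
  have "F (l *\<^sub>R r j) = l * (\<Sum>i\<in>n1 \<union> n2. (r j)$i * (1 / a i))"
    by (simp add: sum_distrib_left mult.assoc)
  also have "\<dots> = l * (1 / a j)" using assms jB n1B n2B by (subst sum_ray) auto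
  finally show ?thesis .
qed

lemma G_ray: assumes "j \<notin> B" shows "G (l *\<^sub>R r j) = (if j \<in> n2 then l * (1 / b j) else 0)"
proof -
  have "G (l *\<^sub>R r j) = l * (\<Sum>i\<in>n2. (r j)$i * (1 / b i))"
    by (simp add: sum_distrib_left mult.assoc)
  also have "\<dots> = (if j \<in> n2 then l * (1 / b j) else 0)" using assms n2B by (subst sum_ray) auto
  finally show ?thesis .
qed

lemma S0gen:
  assumes "u \<in> convex hull (\<Union>j\<in>n1 \<union> n2. {l *\<^sub>R r j | l. al j < ereal l})"
  shows "inV B ab u \<and> (\<forall>j\<in>-B. 0 \<le> u$j) \<and> (\<forall>j\<in>-B. j \<notin> n1 \<union> n2 \<longrightarrow> u$j = 0) \<and> 1 < F u"
proof -
  let ?Z = "{u. inV B ab u \<and> (\<forall>j\<in>-B. 0 \<le> u$j) \<and> (\<forall>j\<in>-B. j \<notin> n1 \<union> n2 \<longrightarrow> u$j = 0) \<and> 1 < F u}"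
  have cvx: "convex ?Z"
  proof (rule convexI)
    fix x y and u v :: real assume h: "x\<in>?Z" "y\<in>?Z" "0\<le>u" "0\<le>v" "u+v=1"
    have "F (u *\<^sub>R x + v *\<^sub>R y) = u * F x + v * F y" by (rule lin_comb)
    moreover have "1 < u * F x + v * F y" using h by (intro comb_gt) auto
    ultimately show "u *\<^sub>R x + v *\<^sub>R y \<in> ?Z" using h by (auto intro: inV_comb)
  qed
  have sub: "(\<Union>j\<in>n1 \<union> n2. {l *\<^sub>R r j | l. al j < ereal l}) \<subseteq> ?Z"
  proof
    fix z assume "z \<in> (\<Union>j\<in>n1 \<union> n2. {l *\<^sub>R r j | l. al j < ereal l})"
    then obtain j l where j: "j \<in> n1 \<union> n2" "al j < ereal l" "z = l *\<^sub>R r j" by blast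
    have jB: "j \<notin> B" using n1B n2B j by auto
    have aa: "al j = ereal (a j)" "0 < a j" using al_fin j(1) by auto
    have la: "a j < l" using j(2) aa by (metis less_ereal.simps(1))
    have "1 < l * (1 / a j)" using la aa by (simp add: field_simps)
    then have "1 < F z" using F_ray[OF j(1)] j(3) by simp
    moreover have "inV B ab z" using inV_ray[OF jB] j(3) by simp
    moreover have "\<forall>i\<in>-B. z$i = (if i = j then l else 0)" using j(3) jB by (auto simp: rbar_def)
    ultimately show "z \<in> ?Z" using la aa j(1) by auto
  qed
  have "convex hull (\<Union>j\<in>n1 \<union> n2. {l *\<^sub>R r j | l. al j < ereal l}) \<subseteq> ?Z"
    using hull_minimal[of _ _ convex] sub cvx by blast
  then show ?thesis using assms by blast
qed

lemma Skgen:
  assumes "u \<in> convex hull (\<Union>j\<in>n2. {l *\<^sub>R r j | l. 0 \<le> l \<and> ereal l < be j})"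
  shows "inV B ab u \<and> (\<forall>j\<in>-B. 0 \<le> u$j) \<and> (\<forall>j\<in>-B. j \<notin> n2 \<longrightarrow> u$j = 0) \<and> G u < 1"
proof -
  let ?Z = "{u. inV B ab u \<and> (\<forall>j\<in>-B. 0 \<le> u$j) \<and> (\<forall>j\<in>-B. j \<notin> n2 \<longrightarrow> u$j = 0) \<and> G u < 1}"
  have cvx: "convex ?Z"
  proof (rule convexI)
    fix x y and u v :: real assume h: "x\<in>?Z" "y\<in>?Z" "0\<le>u" "0\<le>v" "u+v=1"
    have "G (u *\<^sub>R x + v *\<^sub>R y) = u * G x + v * G y" by (rule lin_comb)
    moreover have "u * G x + v * G y < 1" using h by (intro comb_lt) auto
    ultimately show "u *\<^sub>R x + v *\<^sub>R y \<in> ?Z" using h by (auto intro: inV_comb)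
  qed
  have sub: "(\<Union>j\<in>n2. {l *\<^sub>R r j | l. 0 \<le> l \<and> ereal l < be j}) \<subseteq> ?Z"
  proof
    fix z assume "z \<in> (\<Union>j\<in>n2. {l *\<^sub>R r j | l. 0 \<le> l \<and> ereal l < be j})"
    then obtain j l where j: "j \<in> n2" "0 \<le> l" "ereal l < be j" "z = l *\<^sub>R r j" by blast
    have jB: "j \<notin> B" using n2B j by auto
    have bb': "be j = ereal (b j)" "a j < b j" "0 < a j" using be_fin al_fin j(1) by auto
    have lb: "l < b j" using j(3) bb' by (metis less_ereal.simps(1))
    have "l * (1 / b j) < 1" using lb bb' by (simp add: field_simps)
    then have "G z < 1" using G_ray[OF jB] j by simp
    moreover have "inV B ab z" using inV_ray[OF jB] j by simp
    moreover have "\<forall>i\<in>-B. z$i = (if i = j then l else 0)" using j jB by (auto simp: rbar_def)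
    ultimately show "z \<in> ?Z" using j by auto
  qed
  have "convex hull (\<Union>j\<in>n2. {l *\<^sub>R r j | l. 0 \<le> l \<and> ereal l < be j}) \<subseteq> ?Z"
    using hull_minimal[of _ _ convex] sub cvx by blast
  then show ?thesis using assms by blast
qed

end


context setting begin

lemma Tmem:
  assumes V: "inV B ab z" and nn: "\<forall>j\<in>-B. 0 \<le> z$j" and zr: "\<forall>j\<in>-B. j \<notin> n1 \<union> n2 \<longrightarrow> z$j = 0"
    and F1: "1 < F z" and G1: "G z < 1"
  shows "z \<in> convex hull (\<Union>j\<in>n1 \<union> n2. {l *\<^sub>R r j | l. al j < ereal l \<and> ereal l < be j})"
proof -
  let ?N = "n1 \<union> n2"
  let ?GT = "(\<Union>j\<in>n1 \<union> n2. {l *\<^sub>R r j | l. al j < ereal l \<and> ereal l < be j})"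
  have NB: "?N \<subseteq> -B" using n1B n2B by auto
  define gb where "gb j = (if j \<in> n2 then 1 / b j else 0)" for j
  have Gz: "G z = (\<Sum>j\<in>?N. z$j * gb j)"
  proof -
    have "(\<Sum>j\<in>?N. z$j * gb j) = (\<Sum>j\<in>?N. if j\<in>n2 then z$j * (1/b j) else 0)"
      by (intro sum.cong) (auto simp: gb_def)
    also have "\<dots> = (\<Sum>j\<in>?N \<inter> n2. z$j * (1/b j))" using sum.inter_restrict[where A="n1 \<union> n2" and B=n2 and g="\<lambda>j. z$j * (1/b j)"] by simp
    also have "?N \<inter> n2 = n2" by auto
    finally show ?thesis by simp
  qed
  have gba: "0 \<le> gb j \<and> gb j < 1 / a j" if j: "j \<in> ?N" for j
  proof (cases "j \<in> n2")
    case True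
    then have "a j < b j" "0 < a j" using be_fin al_fin by auto
    then show ?thesis using True by (simp add: gb_def field_simps)
  next
    case False
    then show ?thesis using al_fin[OF j] by (simp add: gb_def)
  qed
  define th where "th = (1 - G z)/(F z - G z)"
  have th0: "0 < th" and th1: "th < 1" using F1 G1 by (auto simp: th_def field_simps)
  define t where "t j = z$j * gb j + th * (z$j * (1/a j) - z$j * gb j)" for j
  define J where "J = {j \<in> ?N. 0 < z$j}"
  have JN: "J \<subseteq> ?N" by (auto simp: J_def)
  have fJ: "finite J" by simp
  have z0: "z$j = 0" if "j \<in> -B" "j \<notin> J" for j
    using that nn zr by (force simp: J_def)
  have sumt: "(\<Sum>j\<in>J. t j) = 1"
  proof -
    have "(\<Sum>j\<in>J. t j) = (\<Sum>j\<in>?N. t j)"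
      using JN NB z0 by (intro sum.mono_neutral_left) (auto simp: t_def)
    also have "\<dots> = G z + th * (F z - G z)"
      unfolding t_def Gz sum.distrib sum_subtractf[symmetric] sum_distrib_left[symmetric] by simp
    also have "\<dots> = 1" using F1 G1 by (simp add: th_def)
    finally show ?thesis .
  qed
  have tb: "z$j * gb j < t j \<and> t j < z$j * (1/a j)" if j: "j \<in> J" for j
  proof -
    have zp: "0 < z$j" and jN: "j \<in> ?N" using j by (auto simp: J_def)
    have "z$j * gb j < z$j * (1/a j)" using gba[OF jN] zp by (intro mult_strict_left_mono) auto
    then have d: "0 < z$j * (1/a j) - z$j * gb j" by simp
    have "0 < th * (z$j * (1/a j) - z$j * gb j)" using th0 d by simp
    moreover have "th * (z$j * (1/a j) - z$j * gb j) < 1 * (z$j * (1/a j) - z$j * gb j)"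
      using th1 d by (intro mult_strict_right_mono) auto
    ultimately show ?thesis by (simp add: t_def)
  qed
  have tpos: "0 < t j" if "j \<in> J" for j
  proof -
    have "0 \<le> z$j * gb j" using that gba JN by (auto simp: J_def)
    then show ?thesis using tb[OF that] by linarith
  qed
  define s where "s j = (z$j / t j) *\<^sub>R r j" for j
  have sGT: "s j \<in> ?GT" if j: "j \<in> J" for j
  proof -
    have jN: "j \<in> ?N" using j JN by auto
    have tp: "0 < t j" by (rule tpos[OF j])
    have aa: "al j = ereal (a j)" "0 < a j" using al_fin[OF jN] by auto
    have "t j < z$j / a j" using tb[OF j] by simp
    then have "a j < z$j / t j" using aa tp by (simp add: field_simps)
    then have A: "al j < ereal (z$j / t j)" using aa by (metis less_ereal.simps(1))
    have Bq: "ereal (z$j / t j) < be j"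
    proof (cases "j \<in> n2")
      case True
      have bb': "be j = ereal (b j)" "a j < b j" using be_fin[OF True] by auto
      have "z$j / b j < t j" using tb[OF j] True by (simp add: gb_def)
      then have "z$j / t j < b j" using aa bb' tp by (simp add: field_simps)
      then show ?thesis using bb' by (metis less_ereal.simps(1))
    next
      case False
      then have "j \<in> n1" using jN by auto
      then show ?thesis using be_inf by simp
    qed
    show ?thesis using A Bq jN unfolding s_def by blast
  qed
  have "(\<Sum>j\<in>J. t j *\<^sub>R s j) \<in> convex hull ?GT"
  proof (rule convex_sum[OF fJ convex_convex_hull sumt])
    fix i assume i: "i \<in> J"
    show "0 \<le> t i" using tpos[OF i] by simp
    show "s i \<in> convex hull ?GT" by (rule hull_inc[OF sGT[OF i]])
  qed
  moreover have "(\<Sum>j\<in>J. t j *\<^sub>R s j) = z"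
  proof -
    have "(\<Sum>j\<in>J. t j *\<^sub>R s j) = (\<Sum>j\<in>J. z$j *\<^sub>R r j)"
      using tpos by (intro sum.cong) (auto simp: s_def, metis less_irrefl)
    also have "\<dots> = (\<Sum>j\<in>-B. z$j *\<^sub>R r j)"
      using JN NB z0 by (intro sum.mono_neutral_left) auto
    also have "\<dots> = z" using inV_repr[OF V] by simp
    finally show ?thesis .
  qed
  ultimately show ?thesis by simp
qed

end


context setting begin

lemma TC_S0: "TC C B bb ab \<subseteq> S0 C B bb ab"
proof -
  have "(\<Union>j\<in>n1 \<union> n2. {l *\<^sub>R r j | l. al j < ereal l \<and> ereal l < be j})
        \<subseteq> (\<Union>j\<in>n1 \<union> n2. {l *\<^sub>R r j | l. al j < ereal l})" by blast
  then have "convex hull (\<Union>j\<in>n1 \<union> n2. {l *\<^sub>R r j | l. al j < ereal l \<and> ereal l < be j})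
        \<subseteq> convex hull (\<Union>j\<in>n1 \<union> n2. {l *\<^sub>R r j | l. al j < ereal l})" by (rule hull_mono)
  then show ?thesis unfolding TC_def S0_def by blast
qed

lemma TC_Sk: assumes k: "k \<in> n2" shows "TC C B bb ab \<subseteq> Sk C B bb ab k"
proof -
  let ?GK = "(\<Union>j\<in>n2. {l *\<^sub>R r j | l. 0 \<le> l \<and> ereal l < be j})"
  let ?GT = "(\<Union>j\<in>n1 \<union> n2. {l *\<^sub>R r j | l. al j < ereal l \<and> ereal l < be j})"
  let ?K = "{u' + d' | u' d'. u' \<in> convex hull ?GK \<and> d' \<in> recc C}"
  have cK: "convex ?K"
  proof (rule convexI)
    fix x1 x2 and u v :: real assume h: "x1 \<in> ?K" "x2 \<in> ?K" "0 \<le> u" "0 \<le> v" "u + v = 1"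
    then obtain u1 d1 u2 d2 where e: "x1 = u1 + d1" "u1 \<in> convex hull ?GK" "d1 \<in> recc C"
      "x2 = u2 + d2" "u2 \<in> convex hull ?GK" "d2 \<in> recc C" by blast
    have "u *\<^sub>R u1 + v *\<^sub>R u2 \<in> convex hull ?GK"
      using e h by (intro convexD[OF convex_convex_hull]) auto
    moreover have "u *\<^sub>R d1 + v *\<^sub>R d2 \<in> recc C"
      using e h by (intro convexD[OF recc_convex[OF cv]]) auto
    moreover have "u *\<^sub>R x1 + v *\<^sub>R x2 = (u *\<^sub>R u1 + v *\<^sub>R u2) + (u *\<^sub>R d1 + v *\<^sub>R d2)"
      using e by (simp add: algebra_simps)
    ultimately show "u *\<^sub>R x1 + v *\<^sub>R x2 \<in> ?K" by blast
  qed
  have bk: "be k = ereal (b k)" "a k < b k" "0 < a k" using be_fin[OF k] al_fin k by auto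
  have zero: "0 \<in> convex hull ?GK"
  proof -
    have b0: "0 < b k" using bk by linarith
    have e0: "ereal 0 < be k" using bk(1) b0 by (metis less_ereal.simps(1))
    have "0 *\<^sub>R r k \<in> ?GK" using k e0 by blast
    then show ?thesis by (simp add: hull_inc)
  qed
  have "?GT \<subseteq> ?K"
  proof
    fix z assume "z \<in> ?GT"
    then obtain j l where j: "j \<in> n1 \<union> n2" "al j < ereal l" "ereal l < be j" "z = l *\<^sub>R r j" by blast
    have aa: "al j = ereal (a j)" "0 < a j" using al_fin j(1) by auto
    have la: "a j < l" using j(2) aa by (metis less_ereal.simps(1))
    show "z \<in> ?K"
    proof (cases "j \<in> n2")
      case True
      have "0 \<le> l" using la aa by linarith
      then have "z \<in> ?GK" using j True by blast
      then have "z \<in> convex hull ?GK" by (simp add: hull_inc)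
      then show ?thesis using recc_zero by force
    next
      case False
      then have "j \<in> n1" using j by auto
      then have "z \<in> recc C" using j(4) la aa N1_recc[OF op cv] by (auto intro: recc_scale)
      then show ?thesis using zero by force
    qed
  qed
  then have hK: "convex hull ?GT \<subseteq> ?K" using hull_minimal[of _ _ convex] cK by blast
  show ?thesis
  proof
    fix x assume "x \<in> TC C B bb ab"
    then obtain u d where x: "x = xb + u + d" "u \<in> convex hull ?GT" "d \<in> recc C"
      unfolding TC_def by blast
    then obtain u' d' where u: "u = u' + d'" "u' \<in> convex hull ?GK" "d' \<in> recc C" using hK by blast
    have "x = xb + u' + 0 *\<^sub>R r k + (d' + d)" using x u by (simp add: algebra_simps)
    moreover have "d' + d \<in> recc C" using u x by (intro recc_add)
    ultimately show "x \<in> Sk C B bb ab k" unfolding Sk_def using u by blast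
  qed
qed

end


lemma aux_c: fixes g i :: real assumes "g < 1" "i < 1"
  shows "g < (max g i + 1)/2" "i < (max g i + 1)/2" "(max g i + 1)/2 < 1"
  using assms by (auto simp: max_def)

context setting begin

lemma G_add: "G (u + v) = G u + G v"
  by (simp only: vector_add_component distrib_right sum.distrib)

lemma hard:
  assumes rs: "recc C \<subseteq> recc (PB B bb ab)" and xP: "x \<in> PB B bb ab"
    and xS0: "x \<in> S0 C B bb ab" and xSk: "\<forall>k\<in>n2. x \<in> Sk C B bb ab k"
  shows "x \<in> TC C B bb ab"
proof -
  let ?D = "recc C"
  let ?G0 = "(\<Union>j\<in>n1 \<union> n2. {l *\<^sub>R r j | l. al j < ereal l})"
  let ?GK = "(\<Union>j\<in>n2. {l *\<^sub>R r j | l. 0 \<le> l \<and> ereal l < be j})"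
  let ?GT = "(\<Union>j\<in>n1 \<union> n2. {l *\<^sub>R r j | l. al j < ereal l \<and> ereal l < be j})"
  define y where "y = x - xb"
  have yV: "inV B ab y" using PB_diff[OF xP] by (simp add: y_def)
  from xS0 obtain u0 d0 where x0: "x = xb + u0 + d0" "u0 \<in> convex hull ?G0" "d0 \<in> ?D"
    unfolding S0_def by blast
  have u0p: "inV B ab u0 \<and> (\<forall>j\<in>-B. 0 \<le> u0$j) \<and> (\<forall>j\<in>-B. j \<notin> n1 \<union> n2 \<longrightarrow> u0$j = 0) \<and> 1 < F u0"
    by (rule S0gen[OF x0(2)])
  have y0: "y - u0 = d0" using x0 by (simp add: y_def algebra_simps)
  have "\<forall>k\<in>n2. \<exists>w. y - w \<in> ?D \<and> inV B ab w \<and> (\<forall>j\<in>-B. j \<noteq> k \<longrightarrow> 0 \<le> w$j)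
          \<and> (\<forall>j\<in>-B. j \<notin> n2 \<longrightarrow> w$j = 0) \<and> G w < 1"
  proof
    fix k assume k: "k \<in> n2"
    from xSk k obtain u \<mu> d where h: "x = xb + u + \<mu> *\<^sub>R r k + d" "u \<in> convex hull ?GK" "\<mu> \<le> 0" "d \<in> ?D"
      unfolding Sk_def by blast
    have up: "inV B ab u \<and> (\<forall>j\<in>-B. 0 \<le> u$j) \<and> (\<forall>j\<in>-B. j \<notin> n2 \<longrightarrow> u$j = 0) \<and> G u < 1"
      by (rule Skgen[OF h(2)])
    have kB: "k \<notin> B" using k n2B by auto
    have bk: "a k < b k" "0 < a k" using be_fin[OF k] al_fin k by auto
    define w where "w = u + \<mu> *\<^sub>R r k"
    have "y - w = d" using h by (simp add: y_def w_def algebra_simps)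
    moreover have "inV B ab w" unfolding w_def using up inV_ray[OF kB] by (intro inV_add) auto
    moreover have "\<forall>j\<in>-B. j \<noteq> k \<longrightarrow> w$j = u$j" by (auto simp: w_def rbar_def)
    moreover have "G w < 1"
    proof -
      have "G w = G u + \<mu> * (1 / b k)" unfolding w_def G_add G_ray[OF kB] using k by simp
      moreover have "\<mu> * (1 / b k) \<le> 0" proof -
        have b0: "0 < b k" using bk by linarith
        then show ?thesis using h(3) by (simp add: divide_nonpos_pos)
      qed
      ultimately show ?thesis using up by linarith
    qed
    ultimately show "\<exists>w. y - w \<in> ?D \<and> inV B ab w \<and> (\<forall>j\<in>-B. j \<noteq> k \<longrightarrow> 0 \<le> w$j)
          \<and> (\<forall>j\<in>-B. j \<notin> n2 \<longrightarrow> w$j = 0) \<and> G w < 1"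
      using up h(4) k by (intro exI[of _ w]) auto
  qed
  from bchoice[OF this] obtain wk where wk: "\<forall>k\<in>n2. y - wk k \<in> ?D \<and> inV B ab (wk k) \<and> (\<forall>j\<in>-B. j \<noteq> k \<longrightarrow> 0 \<le> (wk k)$j)
          \<and> (\<forall>j\<in>-B. j \<notin> n2 \<longrightarrow> (wk k)$j = 0) \<and> G (wk k) < 1"
    by blast
  define W where "W = insert u0 (wk ` n2)"
  define Fr where "Fr = {z. y - z \<in> ?D \<and> inV B ab z \<and> (\<forall>j\<in>-B. j \<notin> n1 \<union> n2 \<longrightarrow> z$j = 0) \<and> (\<forall>j\<in>n1. 0 \<le> z$j)}"
  have cFr: "convex Fr"
  proof (rule convexI)
    fix z1 z2 and u v :: real assume h: "z1 \<in> Fr" "z2 \<in> Fr" "0 \<le> u" "0 \<le> v" "u + v = 1"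
    have "y - (u *\<^sub>R z1 + v *\<^sub>R z2) = u *\<^sub>R (y - z1) + v *\<^sub>R (y - z2)"
    proof -
      have "y = u *\<^sub>R y + v *\<^sub>R y" using h(5) by (metis scaleR_add_left scaleR_one)
      then show ?thesis by (simp add: algebra_simps)
    qed
    moreover have "u *\<^sub>R (y - z1) + v *\<^sub>R (y - z2) \<in> ?D"
      using h by (intro convexD[OF recc_convex[OF cv]]) (auto simp: Fr_def)
    ultimately show "u *\<^sub>R z1 + v *\<^sub>R z2 \<in> Fr" using h by (auto simp: Fr_def intro: inV_comb)
  qed
  have WFr: "W \<subseteq> Fr"
  proof
    fix z assume "z \<in> W"
    then consider "z = u0" | k where "k \<in> n2" "z = wk k" unfolding W_def by blast
    then show "z \<in> Fr"
    proof cases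
      case 1 then show ?thesis using u0p y0 x0(3) n1B by (auto simp: Fr_def)
    next
      case 2
      have "\<forall>j\<in>n1. z$j = 0" using 2 wk n1B n12 by blast
      then show ?thesis using 2 wk by (auto simp: Fr_def)
    qed
  qed
  have hW: "convex hull W \<subseteq> Fr" using hull_minimal[of _ _ convex] cFr WFr by blast
  define Q where "Q = convex hull W \<inter> {z. \<forall>j\<in>n2. 0 \<le> z$j}"
  have cQ: "compact Q"
  proof -
    have "{z::real^'n. \<forall>j\<in>n2. 0 \<le> z$j} = (\<Inter>j\<in>n2. {z::real^'n. z$j \<ge> 0})" by auto
    moreover have "closed (\<Inter>j\<in>n2. {z::real^'n. z$j \<ge> 0})"
      by (intro closed_INT ballI closed_halfspace_component_ge_cart)
    ultimately have "closed {z::real^'n. \<forall>j\<in>n2. 0 \<le> z$j}" by simp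
    moreover have "compact (convex hull W)" by (rule finite_imp_compact_convex_hull) (simp add: W_def)
    ultimately show ?thesis unfolding Q_def by blast
  qed
  have u0Q: "u0 \<in> Q" using u0p n2B by (auto simp: Q_def W_def hull_inc)
  have contG: "continuous_on Q (\<lambda>z. G z)" by (intro continuous_intros)
  obtain p where p: "p \<in> Q" "\<forall>q\<in>Q. G p \<le> G q"
    using continuous_attains_inf[OF cQ _ contG] u0Q by blast
  have pW: "p \<in> convex hull W" using p by (simp add: Q_def)
  have pFr: "p \<in> Fr" using pW hW by blast
  have pnn: "0 \<le> p$j" if "j \<in> -B" for j
  proof -
    show ?thesis
    proof (cases "j \<in> n2")
      case True then show ?thesis using p(1) by (simp add: Q_def)
    next
      case False
      show ?thesis
      proof (cases "j \<in> n1")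
        case True then show ?thesis using pFr by (simp add: Fr_def)
      next
        case False then show ?thesis using pFr that \<open>j \<notin> n2\<close> by (simp add: Fr_def)
      qed
    qed
  qed
  have Gp: "G p < 1"
  proof (rule ccontr)
    assume "\<not> G p < 1"
    then have G1: "1 \<le> G p" by simp
    obtain k where k: "k \<in> n2" "0 < p$k"
    proof (rule ccontr)
      assume "\<not> thesis"
      then have "\<forall>k\<in>n2. p$k \<le> 0" using that by force
      then have "G p \<le> 0"
      proof (intro sum_nonpos)
        fix j assume j: "j \<in> n2"
        have "a j < b j" "0 < a j" using be_fin[OF j] al_fin j by auto
        then have "0 < b j" by linarith
        then show "p$j * (1 / b j) \<le> 0" using \<open>\<forall>k\<in>n2. p$k \<le> 0\<close> j
          by (simp add: divide_nonpos_pos)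
      qed
      then show False using G1 by simp
    qed
    define c where "c = (wk k)$k"
    define t where "t = p$k / (p$k + \<bar>c\<bar> + 1)"
    have t0: "0 < t" and t1: "t < 1" using k by (auto simp: t_def field_simps)
    define q where "q = (1 - t) *\<^sub>R p + t *\<^sub>R wk k"
    have wkW: "wk k \<in> convex hull W" using k by (simp add: W_def hull_inc)
    have qW: "q \<in> convex hull W" unfolding q_def
      using pW wkW t0 t1 by (intro convexD[OF convex_convex_hull]) auto
    have qnn: "0 \<le> q$j" if j: "j \<in> n2" for j
    proof (cases "j = k")
      case True
      have den: "0 < p$k + \<bar>c\<bar> + 1" using k by simp
      have tden: "t * (p$k + \<bar>c\<bar> + 1) = p$k" using den by (simp add: t_def)
      have e1: "t * (p$k + \<bar>c\<bar> + 1) = t * p$k + t * \<bar>c\<bar> + t" by (simp add: algebra_simps)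
      have e2: "(1 - t) * p$k = p$k - t * p$k" by (simp add: algebra_simps)
      have e3: "- (t * \<bar>c\<bar>) \<le> t * c" using t0
        by (metis abs_ge_minus_self minus_le_iff mult_left_mono mult_minus_right less_imp_le)
      have "0 < (1 - t) * p$k + t * c" using tden e1 e2 e3 t0 by linarith
      then show ?thesis using True by (simp add: q_def c_def)
    next
      case False
      have "0 \<le> (wk k)$j" using wk k j False n2B by blast
      moreover have "0 \<le> p$j" using pnn j n2B by blast
      ultimately show ?thesis using t0 t1 by (simp add: q_def)
    qed
    have qQ: "q \<in> Q" using qW qnn by (simp add: Q_def)
    have Gq: "G q = (1 - t) * G p + t * G (wk k)" unfolding q_def by (rule lin_comb)
    have Gw: "G (wk k) < G p" using wk k G1 by fastforce
    have "t * G (wk k) < t * G p" using Gw t0 by (rule mult_strict_left_mono)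
    moreover have "(1 - t) * G p = G p - t * G p" by (simp add: algebra_simps)
    ultimately have "G q < G p" using Gq by linarith
    then show False using p(2) qQ by fastforce
  qed
  show ?thesis
  proof (cases "G u0 < 1")
    case True
    have "u0 \<in> convex hull ?GT" using u0p True by (intro Tmem) auto
    then show ?thesis using x0 unfolding TC_def by blast
  next
    case False
    then have G1: "1 \<le> G u0" by simp
    have n2ne: "n2 \<noteq> {}" using G1 by auto
    define m where "m = Min ((\<lambda>j. b j / a j) ` n2)"
    have m1: "1 < m" unfolding m_def using n2ne
    proof (subst Min_gr_iff) 
      show "\<forall>v\<in>(\<lambda>j. b j / a j) ` n2. 1 < v" using be_fin al_fin by (auto simp: field_simps)
    qed auto
    have mle: "m \<le> b j / a j" if "j \<in> n2" for j unfolding m_def using that by (intro Min_le) auto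
    define c where "c = (max (G p) (1/m) + 1)/2"
    have im: "1/m < 1" using m1 by simp
    have mx: "G p \<le> max (G p) (1/m)" "1/m \<le> max (G p) (1/m)" "max (G p) (1/m) < 1"
      using Gp im by auto
    have c: "G p < c" "1/m < c" "c < 1" unfolding c_def using aux_c[OF Gp im] by simp_all
    define s where "s = (G u0 - c)/(G u0 - G p)"
    have s0: "0 \<le> s" and s1: "s \<le> 1" using c G1 by (auto simp: s_def field_simps)
    define z where "z = (1 - s) *\<^sub>R u0 + s *\<^sub>R p"
    have zW: "z \<in> convex hull W" unfolding z_def using pW u0Q s0 s1
      by (intro convexD[OF convex_convex_hull]) (auto simp: Q_def)
    have zFr: "z \<in> Fr" using zW hW by blast
    have zn2: "0 \<le> z$j" if "j \<in> n2" for j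
      using that u0p pnn n2B s0 s1 by (force simp: z_def)
    have znn: "\<forall>j\<in>-B. 0 \<le> z$j"
    proof
      fix j assume j: "j \<in> -B"
      consider "j \<in> n2" | "j \<in> n1" | "j \<notin> n1 \<union> n2" by blast
      then show "0 \<le> z$j" using zn2 zFr j by cases (auto simp: Fr_def)
    qed
    have Gz: "G z = c"
    proof -
      have "G z = (1 - s) * G u0 + s * G p" unfolding z_def by (rule lin_comb)
      also have "\<dots> = G u0 - s * (G u0 - G p)" by (simp add: algebra_simps)
      also have "\<dots> = c" using c G1 by (simp add: s_def)
      finally show ?thesis .
    qed
    have Fz: "m * G z \<le> F z"
    proof -
      have "F z = (\<Sum>j\<in>n1. z$j * (1 / a j)) + (\<Sum>j\<in>n2. z$j * (1 / a j))"
        using n12 by (simp add: sum.union_disjoint)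
      moreover have "0 \<le> (\<Sum>j\<in>n1. z$j * (1 / a j))"
        using znn n1B al_fin by (intro sum_nonneg) force
      moreover have "m * G z \<le> (\<Sum>j\<in>n2. z$j * (1 / a j))"
        unfolding sum_distrib_left
      proof (rule sum_mono)
        fix j assume j: "j \<in> n2"
        have ab': "a j < b j" "0 < a j" using be_fin al_fin j by auto
        have "m / b j \<le> 1 / a j" using mle[OF j] ab' by (simp add: field_simps)
        then have "z$j * (m / b j) \<le> z$j * (1 / a j)" using zn2[OF j] by (rule mult_left_mono)
        then show "m * (z$j * (1 / b j)) \<le> z$j * (1 / a j)" by (simp add: algebra_simps)
      qed
      ultimately show ?thesis by linarith
    qed
    have "1 < m * c" using c m1 by (simp add: field_simps)
    then have F1: "1 < F z" using Fz Gz by simp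
    have "z \<in> convex hull ?GT" using zFr znn F1 Gz c by (intro Tmem) (auto simp: Fr_def)
    moreover have "x = xb + z + (y - z)" by (simp add: y_def)
    moreover have "y - z \<in> ?D" using zFr by (simp add: Fr_def)
    ultimately show ?thesis unfolding TC_def by blast
  qed
qed

end

theorem theorem5:
  fixes A :: "real^'n^'m" and b :: "real^'m" and P :: "(real^'n) set"
    and B :: "'n set" and bb :: "'n \<Rightarrow> real" and ab :: "'n \<Rightarrow> 'n \<Rightarrow> real"
    and C :: "(real^'n) set"
  assumes full_row_rank: "rank A = CARD('m)"
    and P_def: "P = {x. A *v x = b \<and> (\<forall>i. 0 \<le> x$i)}"
    and basis_card: "card B = CARD('m)"
    and basis_indep: "independent ((\<lambda>j. column j A) ` B)"
    and basis_inj: "inj_on (\<lambda>j. column j A) B"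
    and tableau: "{x. A *v x = b} = {x. \<forall>i\<in>B. x$i = bb i - (\<Sum>j\<in>-B. ab i j * x$j)}"
    and bb_nonneg: "\<forall>i\<in>B. 0 \<le> bb i"
    and C_open: "open C" and C_convex: "convex C"
    and xbar_notin: "xbar B bb \<notin> closure C"
    and recc_sub: "recc C \<subseteq> recc (PB B bb ab)"
  shows "PB B bb ab - TC C B bb ab =
           (PB B bb ab - S0 C B bb ab) \<union> (\<Union>k\<in>N2 C B bb ab. PB B bb ab - Sk C B bb ab k)"
proof -
  interpret setting C B bb ab by unfold_locales (rule C_open, rule C_convex)
  show ?thesis
  proof (intro equalityI subsetI)
    fix x assume x: "x \<in> PB B bb ab - TC C B bb ab"
    show "x \<in> (PB B bb ab - S0 C B bb ab) \<union> (\<Union>k\<in>N2 C B bb ab. PB B bb ab - Sk C B bb ab k)"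
    proof (rule ccontr)
      assume "\<not> ?thesis"
      then have "x \<in> S0 C B bb ab" "\<forall>k\<in>N2 C B bb ab. x \<in> Sk C B bb ab k" using x by auto
      then have "x \<in> TC C B bb ab" using hard[OF recc_sub] x by blast
      then show False using x by blast
    qed
  next
    fix x assume x: "x \<in> (PB B bb ab - S0 C B bb ab) \<union> (\<Union>k\<in>N2 C B bb ab. PB B bb ab - Sk C B bb ab k)"
    then show "x \<in> PB B bb ab - TC C B bb ab" using TC_S0 TC_Sk by blast
  qed
qed

end
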